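(* For any LP seed $\Sigma=(\mathbf{x},\mathbf{F})$ of rank $n$, $$\mathcal{U}(\Sigma)=\bigcap_{j=1}^n R[x_1^{\pm1},\dots,x_{j-1}^{\pm1},x_j,x'_j,x_{j+1}^{\pm1},\dots,x_n^{\pm1}].$$
   Context: $R$ is a unique factorization domain containing $\mathbb{Z}$ and $\mathcal{F}$ is the field of rational functions in $n$ variables over $\mathrm{Frac}(R)$. An LP seed of rank $n$ is a pair $(\mathbf{x},\mathbf{F})$ where $\mathbf{x}=\{x_1,\dots,x_n\}$ is a transcendence basis of $\mathcal{F}$ over $\mathrm{Frac}(R)$ and $\mathbf{F}=\{F_1,\dots,F_n\}$ are irreducible polynomials in $R[x_1,\dots,x_n]$ with $x_j\nmid F_i$ for all $i,j$ and $F_i$ not involving $x_i$. The exchange Laurent polynomial is $\hat F_j=F_j/\prod_{k\neq j}x_k^{a_k}$, with $a_k\in\mathbb{Z}_{\ge0}$ maximal such that $F_k^{a_k}$ divides $F_j|_{x_k\leftarrow F_k/x'_k}$ in $R[x_1,\dots,x_{k-1},(x'_k)^{-1},x_{k+1},\dots,x_n]$; $\hat F_j$ is a Laurent polynomial in the $x_i$, $i\ne j$. Set $x'_j=\hat F_j/x_j\in\mathcal{F}$ and let $\mathbf{x}_j=(\mathbf{x}\setminus\{x_j\})\cup\{x'_j\}$. The upper bound is $\mathcal{U}(\Sigma)=R[\mathbf{x}^{\pm1}]\cap R[\mathbf{x}_1^{\pm1}]\cap\dots\cap R[\mathbf{x}_n^{\pm1}]\subseteq\mathcal{F}$, where $R[\mathbf{z}^{\pm1}]$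 is the ring of Laurent polynomials over $R$ in the elements of $\mathbf{z}$. *)

theory Defs
  imports "HOL-Library.Poly_Mapping" "HOL-Computational_Algebra.Computational_Algebra"
begin

(* Multivariate polynomials over 'r in the variables t_0, t_1, t_2, ...:
   monomials are finitely supported exponent vectors nat \<Rightarrow>\<^sub>0 nat. *)
type_synonym 'r mpoly = "(nat \<Rightarrow>\<^sub>0 nat) \<Rightarrow>\<^sub>0 'r"

type_synonym 'r lpoly = "(nat \<Rightarrow>\<^sub>0 int) \<Rightarrow>\<^sub>0 'r"

(* The field of rational functions in n variables over Frac(R), realised as the
   fraction field of the polynomial ring R[t_1,...,t_n] (variables with index in {1..n}
   are the relevant ones; the ambient field is Frac(R[t_0,t_1,...]), which contains
   Frac(R[t_1..t_n]) as a subfield, see the carrier RatFun below). *)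
type_synonym 'r ratfun = "'r mpoly fract"

definition constF :: "'r::idom \<Rightarrow> 'r ratfun" where
  "constF c = Fract (Poly_Mapping.single 0 c) 1"

definition varF :: "nat \<Rightarrow> 'r::idom ratfun" where
  "varF i = Fract (Poly_Mapping.single (Poly_Mapping.single i 1) 1) 1"

definition vars :: "(('v \<Rightarrow>\<^sub>0 'e::zero) \<Rightarrow>\<^sub>0 'r::zero) \<Rightarrow> 'v set" where
  "vars p = (\<Union>m\<in>Poly_Mapping.keys p. Poly_Mapping.keys m)"

definition evalP :: "(nat \<Rightarrow> 'r::idom ratfun) \<Rightarrow> 'r mpoly \<Rightarrow> 'r ratfun" where
  "evalP z p = (\<Sum>m\<in>Poly_Mapping.keys p. constF (Poly_Mapping.lookup p m) * (\<Prod>i\<in>Poly_Mapping.keys m. z i ^ Poly_Mapping.lookup m i))"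

definition evalL :: "(nat \<Rightarrow> 'r::idom ratfun) \<Rightarrow> 'r lpoly \<Rightarrow> 'r ratfun" where
  "evalL z p = (\<Sum>m\<in>Poly_Mapping.keys p. constF (Poly_Mapping.lookup p m) * (\<Prod>i\<in>Poly_Mapping.keys m. z i powi Poly_Mapping.lookup m i))"

definition RatFun :: "nat \<Rightarrow> 'r::idom ratfun set" where
  "RatFun n = {evalP varF p / evalP varF q | p q. vars p \<subseteq> {1..n} \<and> vars q \<subseteq> {1..n} \<and> q \<noteq> 0}"

definition SubField :: "(nat \<Rightarrow> 'r::idom ratfun) \<Rightarrow> nat \<Rightarrow> 'r ratfun set" where
  "SubField z n = {evalP z p / evalP z q | p q. vars p \<subseteq> {1..n} \<and> vars q \<subseteq> {1..n} \<and> evalP z q \<noteq> 0}"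

definition alg_indep :: "(nat \<Rightarrow> 'r::idom ratfun) \<Rightarrow> nat \<Rightarrow> bool" where
  "alg_indep z n \<longleftrightarrow> (\<forall>p. vars p \<subseteq> {1..n} \<longrightarrow> evalP z p = 0 \<longrightarrow> p = 0)"

definition algebraic_over :: "'a::field set \<Rightarrow> 'a \<Rightarrow> bool" where
  "algebraic_over K f \<longleftrightarrow> (\<exists>q::'a poly. q \<noteq> 0 \<and> (\<forall>i. coeff q i \<in> K) \<and> poly q f = 0)"

definition transc_basis :: "(nat \<Rightarrow> 'r::idom ratfun) \<Rightarrow> nat \<Rightarrow> bool" where
  "transc_basis z n \<longleftrightarrow> (\<forall>i\<in>{1..n}. z i \<in> RatFun n) \<and> alg_indep z n \<and>
     (\<forall>f\<in>RatFun n. algebraic_over (SubField z n) f)"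

definition toL :: "'r::comm_monoid_add mpoly \<Rightarrow> 'r lpoly" where
  "toL p = (\<Sum>m\<in>Poly_Mapping.keys p. Poly_Mapping.single (Poly_Mapping.map int m) (Poly_Mapping.lookup p m))"

definition monoL :: "(nat \<Rightarrow>\<^sub>0 int) \<Rightarrow> 'r::comm_ring_1 lpoly" where
  "monoL e = Poly_Mapping.single e 1"

(* F_j |_{x_k <- F_k / y}, where the formal variable y (= x'_k) is the variable of index 0 *)
definition substL :: "'r::comm_ring_1 mpoly \<Rightarrow> nat \<Rightarrow> 'r mpoly \<Rightarrow> 'r lpoly" where
  "substL Fj k Fk = (\<Sum>m\<in>Poly_Mapping.keys Fj.
      Poly_Mapping.single (Poly_Mapping.map int (m - Poly_Mapping.single k (Poly_Mapping.lookup m k))) (Poly_Mapping.lookup Fj m)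
      * toL Fk ^ Poly_Mapping.lookup m k * monoL (Poly_Mapping.single 0 (- int (Poly_Mapping.lookup m k))))"

(* the ring R[x_1,..,x_{k-1},(x'_k)^{-1},x_{k+1},..,x_n] (formal, x'_k = variable 0) *)
definition ringA :: "nat \<Rightarrow> nat \<Rightarrow> 'r::comm_ring_1 lpoly set" where
  "ringA n k = {p. vars p \<subseteq> {0..n} - {k} \<and>
      (\<forall>m\<in>Poly_Mapping.keys p. (\<forall>i\<in>{1..n}. Poly_Mapping.lookup m i \<ge> 0) \<and> Poly_Mapping.lookup m 0 \<le> 0)}"

definition dvd_in :: "'a::times set \<Rightarrow> 'a \<Rightarrow> 'a \<Rightarrow> bool" where
  "dvd_in S a b \<longleftrightarrow> (\<exists>c\<in>S. b = a * c)"

definition expo :: "nat \<Rightarrow> (nat \<Rightarrow> 'r::comm_ring_1 mpoly) \<Rightarrow> nat \<Rightarrow> nat \<Rightarrow> nat" where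
  "expo n F j k = (GREATEST a. dvd_in (ringA n k) (toL (F k) ^ a) (substL (F j) k (F k)))"

definition hatF :: "nat \<Rightarrow> (nat \<Rightarrow> 'r::comm_ring_1 mpoly) \<Rightarrow> nat \<Rightarrow> 'r lpoly" where
  "hatF n F j = toL (F j) *
     monoL (\<Sum>k\<in>{1..n} - {j}. Poly_Mapping.single k (- int (expo n F j k)))"


definition LP_seed :: "nat \<Rightarrow> (nat \<Rightarrow> 'r::{factorial_semiring,idom} ratfun) \<Rightarrow> (nat \<Rightarrow> 'r mpoly) \<Rightarrow> bool" where
  "LP_seed n x F \<longleftrightarrow> transc_basis x n \<and>
     (\<forall>i\<in>{1..n}. vars (F i) \<subseteq> {1..n} - {i} \<and> irreducible (F i) \<and>
        (\<forall>j\<in>{1..n}. \<not> Poly_Mapping.single (Poly_Mapping.single j 1) 1 dvd F i))"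

definition xprime :: "nat \<Rightarrow> (nat \<Rightarrow> 'r::idom ratfun) \<Rightarrow> (nat \<Rightarrow> 'r mpoly) \<Rightarrow> nat \<Rightarrow> 'r ratfun" where
  "xprime n x F j = evalL x (hatF n F j) / x j"

definition LaurentRing :: "(nat \<Rightarrow> 'r::idom ratfun) \<Rightarrow> nat \<Rightarrow> 'r ratfun set" where
  "LaurentRing z n = {evalL z p | p. vars p \<subseteq> {1..n}}"

definition upper_bound :: "nat \<Rightarrow> (nat \<Rightarrow> 'r::idom ratfun) \<Rightarrow> (nat \<Rightarrow> 'r mpoly) \<Rightarrow> 'r ratfun set" where
  "upper_bound n x F = LaurentRing x n \<inter> (\<Inter>j\<in>{1..n}. LaurentRing (x(j := xprime n x F j)) n)"

(* R[x_1^{\<plusminus>1},..,x_{j-1}^{\<plusminus>1}, x_j, x'_j, x_{j+1}^{\<plusminus>1},..,x_n^{\<plusminus>1}]; x'_j plays variable 0 *)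
definition MixedRing :: "nat \<Rightarrow> (nat \<Rightarrow> 'r::idom ratfun) \<Rightarrow> (nat \<Rightarrow> 'r mpoly) \<Rightarrow> nat \<Rightarrow> 'r ratfun set" where
  "MixedRing n x F j = {evalL (x(0 := xprime n x F j)) p | p. vars p \<subseteq> {0..n} \<and>
      (\<forall>m\<in>Poly_Mapping.keys p. Poly_Mapping.lookup m j \<ge> 0 \<and> Poly_Mapping.lookup m 0 \<ge> 0)}"

end

theory Submission
  imports Defs
begin


lemma lookup_map_pm: "Poly_Mapping.lookup (Poly_Mapping.map g p) k = (if Poly_Mapping.lookup p k = 0 then 0 else g (Poly_Mapping.lookup p k))"
  by (simp add: Poly_Mapping.map.rep_eq)

lemma keys_map_int: "Poly_Mapping.keys (Poly_Mapping.map int m) = Poly_Mapping.keys m"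
  by (auto simp: in_keys_iff lookup_map_pm split: if_splits)

lemma lookup_map_int: "Poly_Mapping.lookup (Poly_Mapping.map int m) i = int (Poly_Mapping.lookup m i)"
  by (simp add: lookup_map_pm)

definition sumk :: "('a \<Rightarrow> 'b::zero \<Rightarrow> 'c::comm_monoid_add) \<Rightarrow> ('a \<Rightarrow>\<^sub>0 'b) \<Rightarrow> 'c" where
  "sumk f p = (\<Sum>m\<in>Poly_Mapping.keys p. f m (Poly_Mapping.lookup p m))"

lemma sumk_superset:
  assumes "finite S" "Poly_Mapping.keys p \<subseteq> S" "\<And>m. f m 0 = 0"
  shows "sumk f p = (\<Sum>m\<in>S. f m (Poly_Mapping.lookup p m))"
  unfolding sumk_def
  by (rule sum.mono_neutral_left) (use assms in \<open>auto simp: in_keys_iff\<close>)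

lemma sumk_add:
  assumes "\<And>m. f m 0 = 0" "\<And>m a b. f m (a + b) = f m a + f m b"
  shows "sumk f (p + q) = sumk f p + sumk f (q::'a \<Rightarrow>\<^sub>0 'b::monoid_add)"
proof -
  let ?S = "Poly_Mapping.keys p \<union> Poly_Mapping.keys q"
  have k: "Poly_Mapping.keys (p+q) \<subseteq> ?S" by (rule keys_add)
  have "sumk f (p+q) = (\<Sum>m\<in>?S. f m (Poly_Mapping.lookup (p+q) m))"
    by (rule sumk_superset) (use assms k in auto)
  also have "\<dots> = (\<Sum>m\<in>?S. f m (Poly_Mapping.lookup p m)) + (\<Sum>m\<in>?S. f m (Poly_Mapping.lookup q m))"
    by (simp add: lookup_add assms sum.distrib)
  also have "\<dots> = sumk f p + sumk f q"
    by (subst (1 2) sumk_superset[where S="?S"]) (use assms in auto)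
  finally show ?thesis .
qed

lemma sumk_zero[simp]: "sumk f 0 = 0" by (simp add: sumk_def)

lemma sumk_single:
  assumes "\<And>m. f m 0 = 0"
  shows "sumk f (Poly_Mapping.single k c) = f k c"
  using assms by (cases "c = 0") (auto simp: sumk_def)

lemma sumk_sum:
  assumes "\<And>m. f m 0 = 0" "\<And>m a b. f m (a + b) = f m a + f m b"
  shows "sumk f (\<Sum>i\<in>I. g i) = (\<Sum>i\<in>I. sumk f (g i :: 'a \<Rightarrow>\<^sub>0 'b::comm_monoid_add))"
  by (induction I rule: infinite_finite_induct) (auto simp: sumk_add[OF assms])

lemma pm_expand:
  "p = (\<Sum>m\<in>Poly_Mapping.keys p. Poly_Mapping.single m (Poly_Mapping.lookup p m))"
proof (rule poly_mapping_eqI)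
  fix k
  show "Poly_Mapping.lookup p k = Poly_Mapping.lookup (\<Sum>m\<in>Poly_Mapping.keys p. Poly_Mapping.single m (Poly_Mapping.lookup p m)) k"
    by (simp add: lookup_sum lookup_single when_def in_keys_iff sum.delta)
qed


lemma constF_add: "constF (a + b) = constF a + (constF b :: 'r::idom ratfun)"
  by (simp add: constF_def add_fract single_add)
lemma constF_mult: "constF (a * b) = constF a * (constF b :: 'r::idom ratfun)"
  by (simp add: constF_def mult_single)
lemma constF_0[simp]: "constF 0 = (0 :: 'r::idom ratfun)"
  by (simp add: constF_def Zero_fract_def)
lemma constF_1[simp]: "constF 1 = (1 :: 'r::idom ratfun)"
  by (simp add: constF_def One_fract_def)
lemma constF_uminus: "constF (- a) = - (constF a :: 'r::idom ratfun)"
  by (simp add: constF_def single_uminus)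

definition mon :: "(nat \<Rightarrow> 'r::idom ratfun) \<Rightarrow> (nat \<Rightarrow>\<^sub>0 int) \<Rightarrow> 'r ratfun" where
  "mon z m = (\<Prod>i\<in>Poly_Mapping.keys m. z i powi Poly_Mapping.lookup m i)"

lemma mon_superset:
  assumes "finite S" "Poly_Mapping.keys m \<subseteq> S"
  shows "mon z m = (\<Prod>i\<in>S. z i powi Poly_Mapping.lookup m i)"
  unfolding mon_def
  by (rule prod.mono_neutral_left) (use assms in \<open>auto simp: in_keys_iff\<close>)

lemma mon_add:
  assumes "\<And>i. i \<in> Poly_Mapping.keys a \<union> Poly_Mapping.keys b \<Longrightarrow> z i \<noteq> 0"
  shows "mon z (a + b) = mon z a * mon z b"
proof -
  let ?S = "Poly_Mapping.keys a \<union> Poly_Mapping.keys b"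
  have "mon z (a+b) = (\<Prod>i\<in>?S. z i powi Poly_Mapping.lookup (a+b) i)"
    by (rule mon_superset) (use keys_add[of a b] in auto)
  also have "\<dots> = (\<Prod>i\<in>?S. z i powi Poly_Mapping.lookup a i * z i powi Poly_Mapping.lookup b i)"
    by (rule prod.cong) (auto simp: lookup_add power_int_add assms)
  also have "\<dots> = mon z a * mon z b"
    by (simp add: prod.distrib mon_superset[of ?S])
  finally show ?thesis .
qed

lemma mon_0[simp]: "mon z 0 = 1" by (simp add: mon_def)

lemma mon_single: "mon z (Poly_Mapping.single i k) = z i powi k"
  by (cases "k = 0") (auto simp: mon_def)

lemma mon_nonzero: "(\<And>i. i \<in> Poly_Mapping.keys m \<Longrightarrow> z i \<noteq> 0) \<Longrightarrow> mon z m \<noteq> 0"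
  by (simp add: mon_def)

lemma evalL_sumk: "evalL z p = sumk (\<lambda>m c. constF c * mon z m) p"
  by (simp add: evalL_def sumk_def mon_def)

lemma evalL_add: "evalL z (p + q) = evalL z p + evalL z q"
  unfolding evalL_sumk by (rule sumk_add) (auto simp: constF_add distrib_right)

lemma evalL_0[simp]: "evalL z 0 = 0" by (simp add: evalL_def)

lemma evalL_single: "evalL z (Poly_Mapping.single m c) = constF c * mon z m"
  unfolding evalL_sumk by (rule sumk_single) simp

lemma evalL_sum: "evalL z (\<Sum>i\<in>I. g i) = (\<Sum>i\<in>I. evalL z (g i))"
  unfolding evalL_sumk by (rule sumk_sum) (auto simp: constF_add distrib_right)

lemma evalL_uminus: "evalL z (- p) = - evalL z p"
  by (simp add: evalL_def constF_uminus sum_negf)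

lemma evalL_diff: "evalL z (p - q) = evalL z p - evalL z q"
  using evalL_add[of z p "-q"] by (simp add: evalL_uminus)

lemma vars_iff: "i \<in> vars p \<longleftrightarrow> (\<exists>m\<in>Poly_Mapping.keys p. i \<in> Poly_Mapping.keys m)"
  by (simp add: vars_def)

lemma mult_expand:
  "(p::'r::comm_ring_1 lpoly) * q = (\<Sum>a\<in>Poly_Mapping.keys p. \<Sum>b\<in>Poly_Mapping.keys q.
       Poly_Mapping.single (a + b) (Poly_Mapping.lookup p a * Poly_Mapping.lookup q b))"
  apply (subst (1) pm_expand[of p])
  apply (subst (1) pm_expand[of q])
  apply (simp add: sum_distrib_left sum_distrib_right mult_single)
  apply (rule sum.swap)
  done

lemma evalL_mult:
  assumes "\<And>i. i \<in> vars p \<union> vars q \<Longrightarrow> z i \<noteq> 0"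
  shows "evalL z (p * q) = evalL z p * evalL z q"
proof -
  have "evalL z (p*q) = (\<Sum>a\<in>Poly_Mapping.keys p. \<Sum>b\<in>Poly_Mapping.keys q.
       constF (Poly_Mapping.lookup p a) * mon z a * (constF (Poly_Mapping.lookup q b) * mon z b))"
    apply (subst mult_expand)
    apply (simp add: evalL_sum evalL_single constF_mult)
    apply (rule sum.cong, simp, rule sum.cong, simp)
    apply (subst mon_add)
     apply (auto simp: vars_iff intro!: assms)
    done
  also have "\<dots> = evalL z p * evalL z q"
    by (simp add: evalL_def mon_def sum_product)
  finally show ?thesis .
qed


lemma toL_sumk: "toL P = sumk (\<lambda>m c. Poly_Mapping.single (Poly_Mapping.map int m) c) P"
  by (simp add: toL_def sumk_def)

lemma toL_sum: "toL (\<Sum>i\<in>I. g i) = (\<Sum>i\<in>I. toL (g i))"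
  unfolding toL_sumk by (rule sumk_sum) (auto simp: single_add)

lemma toL_single: "toL (Poly_Mapping.single m c) = Poly_Mapping.single (Poly_Mapping.map int m) c"
  unfolding toL_sumk by (rule sumk_single) simp

lemma toL_0[simp]: "toL 0 = 0" by (simp add: toL_def)

lemma mon_map_int: "mon z (Poly_Mapping.map int m) = (\<Prod>i\<in>Poly_Mapping.keys m. z i ^ Poly_Mapping.lookup m i)"
  by (simp add: mon_def keys_map_int lookup_map_int)

lemma evalL_toL: "evalL z (toL P) = evalP z P"
  by (simp add: toL_def evalL_sum evalL_single mon_map_int evalP_def)

lemma keys_toL: "Poly_Mapping.keys (toL P) \<subseteq> Poly_Mapping.map int ` Poly_Mapping.keys P"
proof -
  have "Poly_Mapping.keys (toL P) \<subseteq> (\<Union>m\<in>Poly_Mapping.keys P. Poly_Mapping.keys (Poly_Mapping.single (Poly_Mapping.map int m) (Poly_Mapping.lookup P m)))"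
    unfolding toL_def by (rule keys_sum)
  thus ?thesis by (auto split: if_splits)
qed

lemma vars_toL: "vars (toL P) \<subseteq> vars P"
proof
  fix i assume "i \<in> vars (toL P)"
  then obtain m where m: "m \<in> Poly_Mapping.keys (toL P)" "i \<in> Poly_Mapping.keys m" by (auto simp: vars_def)
  then obtain m0 where "m0 \<in> Poly_Mapping.keys P" "m = Poly_Mapping.map int m0" using keys_toL[of P] by blast
  thus "i \<in> vars P" using m(2) by (auto simp: vars_def keys_map_int)
qed

lemma t1:
  fixes x :: "nat \<Rightarrow> 'r::idom ratfun"
  shows "evalP x (Poly_Mapping.single (Poly_Mapping.single i 1) (1::'r)) = x i"
proof -
  have k1: "Poly_Mapping.keys (Poly_Mapping.single (Poly_Mapping.single i (1::nat)) (1::'r)) = {Poly_Mapping.single i 1}"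
    by simp
  have k2: "Poly_Mapping.keys (Poly_Mapping.single i (1::nat)) = {i}" by simp
  show ?thesis unfolding evalP_def k1 k2 by simp
qed
lemma t2: "vars (Poly_Mapping.single (Poly_Mapping.single i (1::nat)) (1::'r::idom)) = {i}"
  by (simp add: vars_def)
lemma alg_indep_nz:
  fixes x :: "nat \<Rightarrow> 'r::idom ratfun"
  assumes "alg_indep x n" "i \<in> {1..n}"
  shows "x i \<noteq> 0"
proof
  assume h: "x i = 0"
  let ?p = "Poly_Mapping.single (Poly_Mapping.single i (1::nat)) (1::'r)"
  have "vars ?p \<subseteq> {1..n}" unfolding t2 using assms(2) by simp
  moreover have "evalP x ?p = 0" using h t1[of x i] by simp
  ultimately have "?p = 0" by (rule assms(1)[unfolded alg_indep_def, rule_format])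
  hence "Poly_Mapping.lookup ?p (Poly_Mapping.single i (1::nat)) = (0::'r)" by simp
  thus False by simp
qed

lemma map_int_nat:
  assumes "\<forall>i. Poly_Mapping.lookup m i \<ge> 0"
  shows "Poly_Mapping.map int (Poly_Mapping.map nat m) = m"
proof (rule poly_mapping_eqI)
  fix k
  have "Poly_Mapping.lookup m k \<ge> 0" using assms by blast
  thus "Poly_Mapping.lookup (Poly_Mapping.map int (Poly_Mapping.map nat m)) k = Poly_Mapping.lookup m k"
    by (simp add: lookup_map_pm)
qed

lemma keys_map_nat: "Poly_Mapping.keys (Poly_Mapping.map nat m) \<subseteq> Poly_Mapping.keys m"
  by (auto simp: in_keys_iff lookup_map_pm split: if_splits)

lemma uniqL:
  fixes p :: "'r::idom lpoly"
  assumes ai: "alg_indep x n" and vp: "vars p \<subseteq> {1..n}" and ev: "evalL x p = 0"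
  shows "p = 0"
proof -
  have xnz: "\<And>i. i \<in> {1..n} \<Longrightarrow> x i \<noteq> 0" using alg_indep_nz[OF ai] by blast
  define E where "E = (\<Sum>a\<in>Poly_Mapping.keys p. \<Sum>i\<in>Poly_Mapping.keys a. nat \<bar>Poly_Mapping.lookup a i\<bar>)"
  have Eb: "\<bar>Poly_Mapping.lookup a i\<bar> \<le> int E" if "a \<in> Poly_Mapping.keys p" for a i
  proof (cases "i \<in> Poly_Mapping.keys a")
    case True
    have "nat \<bar>Poly_Mapping.lookup a i\<bar> \<le> (\<Sum>i\<in>Poly_Mapping.keys a. nat \<bar>Poly_Mapping.lookup a i\<bar>)"
      by (rule member_le_sum) (use True in auto)
    also have "\<dots> \<le> E" unfolding E_def
      by (rule member_le_sum[where f="\<lambda>a. \<Sum>i\<in>Poly_Mapping.keys a. nat \<bar>Poly_Mapping.lookup a i\<bar>"]) (use that in auto)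
    finally show ?thesis by linarith
  next
    case False then show ?thesis by (simp add: in_keys_iff)
  qed
  define e where "e = (\<Sum>i\<in>{1..n}. Poly_Mapping.single i (int E))"
  have le: "Poly_Mapping.lookup e i = (if i \<in> {1..n} then int E else 0)" for i
    by (simp add: e_def lookup_sum lookup_single when_def)
  have ke: "Poly_Mapping.keys e \<subseteq> {1..n}" by (auto simp: in_keys_iff le split: if_splits)
  define p' where "p' = p * Poly_Mapping.single e 1"
  have ev': "evalL x p' = 0" unfolding p'_def
    by (subst evalL_mult) (use vp ke xnz ev in \<open>auto simp: vars_def\<close>)
  have kp': "Poly_Mapping.keys p' \<subseteq> {a + e | a. a \<in> Poly_Mapping.keys p}"
    unfolding p'_def using keys_mult[of p "Poly_Mapping.single e 1"] by auto
  have nonneg: "\<forall>i. Poly_Mapping.lookup m i \<ge> 0" if mk: "m \<in> Poly_Mapping.keys p'" for m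
  proof
    fix i
    obtain a where a: "a \<in> Poly_Mapping.keys p" "m = a + e" using kp' mk by blast
    show "Poly_Mapping.lookup m i \<ge> 0"
    proof (cases "i \<in> {1..n}")
      case True thus ?thesis using Eb[OF a(1), of i] a(2) by (simp add: lookup_add le)
    next
      case False
      hence "i \<notin> Poly_Mapping.keys a" using vp a(1) by (auto simp: vars_def)
      thus ?thesis using a(2) False by (simp add: lookup_add le in_keys_iff)
    qed
  qed
  have kvars: "Poly_Mapping.keys m \<subseteq> {1..n}" if mk: "m \<in> Poly_Mapping.keys p'" for m
  proof -
    obtain a where a: "a \<in> Poly_Mapping.keys p" "m = a + e" using kp' mk by blast
    have "Poly_Mapping.keys a \<subseteq> {1..n}" using vp a(1) by (auto simp: vars_def)
    thus ?thesis using a(2) ke keys_add[of a e] by auto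
  qed
  define Q where "Q = (\<Sum>m\<in>Poly_Mapping.keys p'. Poly_Mapping.single (Poly_Mapping.map nat m) (Poly_Mapping.lookup p' m))"
  have tQ: "toL Q = p'"
    unfolding Q_def toL_sum toL_single
    by (subst (2) pm_expand) (rule sum.cong, auto simp: map_int_nat nonneg)
  have vQ: "vars Q \<subseteq> {1..n}"
  proof -
    have "Poly_Mapping.keys Q \<subseteq> (\<Union>m\<in>Poly_Mapping.keys p'. Poly_Mapping.keys (Poly_Mapping.single (Poly_Mapping.map nat m) (Poly_Mapping.lookup p' m)))"
      unfolding Q_def by (rule keys_sum)
    thus ?thesis using kvars keys_map_nat by (fastforce simp: vars_def split: if_splits)
  qed
  have "evalP x Q = 0" using ev' by (simp add: evalL_toL[symmetric] tQ)
  hence "Q = 0" using ai vQ unfolding alg_indep_def by blast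
  hence "p' = 0" using tQ by simp
  moreover have "Poly_Mapping.single e (1::'r) \<noteq> 0"
  proof
    assume "Poly_Mapping.single e (1::'r) = 0"
    hence "Poly_Mapping.lookup (Poly_Mapping.single e (1::'r)) e = Poly_Mapping.lookup 0 e" by simp
    thus False by simp
  qed
  ultimately show "p = 0" unfolding p'_def using no_zero_divisors by blast
qed


lemma vars_add: "vars (p + q) \<subseteq> vars p \<union> vars q"
  using keys_add[of p q] by (auto simp: vars_def)

lemma vars_mult: "vars ((p::'r::comm_ring_1 lpoly) * q) \<subseteq> vars p \<union> vars q"
proof
  fix i assume "i \<in> vars (p*q)"
  then obtain m where m: "m \<in> Poly_Mapping.keys (p*q)" "i \<in> Poly_Mapping.keys m" by (auto simp: vars_def)
  then obtain a b where ab: "a \<in> Poly_Mapping.keys p" "b \<in> Poly_Mapping.keys q" "m = a + b"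
    using keys_mult[of p q] by blast
  then have "i \<in> Poly_Mapping.keys a \<union> Poly_Mapping.keys b" using m keys_add[of a b] by auto
  thus "i \<in> vars p \<union> vars q" using ab by (auto simp: vars_def)
qed

lemma vars_single: "vars (Poly_Mapping.single m c) \<subseteq> Poly_Mapping.keys m"
  by (auto simp: vars_def split: if_splits)

lemma vars_uminus: "vars (- p) = vars p"
  by (simp add: vars_def)

lemma vars_diff: "vars ((p::'r::comm_ring_1 lpoly) - q) \<subseteq> vars p \<union> vars q"
  using vars_add[of p "-q"] by (simp add: vars_uminus)

lemma evalL_cong:
  assumes "\<And>i. i \<in> vars p \<Longrightarrow> z i = z' i"
  shows "evalL z p = evalL z' p"
proof -
  have "mon z m = mon z' m" if mk: "m \<in> Poly_Mapping.keys p" for m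
  proof -
    have "z i = z' i" if "i \<in> Poly_Mapping.keys m" for i
      using assms[of i] vars_iff[of i p] mk that by blast
    thus ?thesis unfolding mon_def by (auto intro!: prod.cong)
  qed
  thus ?thesis unfolding evalL_sumk sumk_def by (auto intro!: sum.cong)
qed

lemma evalL_power:
  assumes "vars p \<subseteq> S" "\<And>i. i \<in> S \<Longrightarrow> z i \<noteq> 0"
  shows "evalL z ((p::'r::idom lpoly) ^ k) = evalL z p ^ k \<and> vars (p ^ k) \<subseteq> S"
proof (induction k)
  case 0
  have "evalL z (1::'r lpoly) = 1" using evalL_single[of z 0 "1::'r"] by simp
  moreover have "vars (1::'r lpoly) = {}" by (simp add: vars_def)
  ultimately show ?case by simp
next
  case (Suc k)
  have "evalL z (p * p^k) = evalL z p * evalL z (p^k)"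
    by (rule evalL_mult) (use Suc assms in blast)
  then show ?case using Suc assms vars_mult[of p "p^k"] by auto
qed

definition restr :: "((nat \<Rightarrow>\<^sub>0 int) \<Rightarrow> bool) \<Rightarrow> 'r::comm_ring_1 lpoly \<Rightarrow> 'r lpoly" where
  "restr P p = (\<Sum>m\<in>{m\<in>Poly_Mapping.keys p. P m}. Poly_Mapping.single m (Poly_Mapping.lookup p m))"

lemma lookup_restr: "Poly_Mapping.lookup (restr P p) k = (if P k then Poly_Mapping.lookup p k else 0)"
  by (simp add: restr_def lookup_sum lookup_single when_def in_keys_iff sum.delta)

lemma restr_split: "restr P p + restr (\<lambda>m. \<not> P m) p = p"
  by (rule poly_mapping_eqI) (simp add: lookup_add lookup_restr)

lemma restr_add: "restr P (a + b) = restr P a + restr P b"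
  by (rule poly_mapping_eqI) (simp add: lookup_add lookup_restr)

lemma keys_restr: "Poly_Mapping.keys (restr P p) = {m\<in>Poly_Mapping.keys p. P m}"
  by (auto simp: in_keys_iff lookup_restr split: if_splits)

lemma restr_id: "(\<And>m. m \<in> Poly_Mapping.keys p \<Longrightarrow> P m) \<Longrightarrow> restr P p = p"
  by (rule poly_mapping_eqI) (auto simp: lookup_restr in_keys_iff)

lemma restr_zero: "(\<And>m. m \<in> Poly_Mapping.keys p \<Longrightarrow> \<not> P m) \<Longrightarrow> restr P p = 0"
  by (rule poly_mapping_eqI) (auto simp: lookup_restr in_keys_iff)

lemma vars_restr: "vars (restr P p) \<subseteq> vars p"
  by (auto simp: vars_def keys_restr)

lemma restr_mult:
  fixes g w :: "'r::comm_ring_1 lpoly"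
  assumes g: "\<And>m. m \<in> Poly_Mapping.keys g \<Longrightarrow> Poly_Mapping.lookup m j = 0"
  shows "restr (\<lambda>m. Poly_Mapping.lookup m j < 0) (g * w) = g * restr (\<lambda>m. Poly_Mapping.lookup m j < 0) w"
proof -
  let ?N = "\<lambda>m. Poly_Mapping.lookup m j < (0::int)"
  define A where "A = restr ?N w"
  define B where "B = restr (\<lambda>m. \<not> ?N m) w"
  have w: "w = A + B" unfolding A_def B_def by (simp add: restr_split)
  have 1: "restr ?N (g * A) = g * A"
  proof (rule restr_id)
    fix m assume "m \<in> Poly_Mapping.keys (g * A)"
    then obtain a b where "a \<in> Poly_Mapping.keys g" "b \<in> Poly_Mapping.keys A" "m = a + b"
      using keys_mult[of g A] by blast
    thus "?N m" using g by (auto simp: A_def keys_restr lookup_add)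
  qed
  have 2: "restr ?N (g * B) = 0"
  proof (rule restr_zero)
    fix m assume "m \<in> Poly_Mapping.keys (g * B)"
    then obtain a b where "a \<in> Poly_Mapping.keys g" "b \<in> Poly_Mapping.keys B" "m = a + b"
      using keys_mult[of g B] by blast
    thus "\<not> ?N m" using g by (auto simp: B_def keys_restr lookup_add)
  qed
  have gw: "g * w = g * A + g * B" using w by (simp add: distrib_left)
  have "restr ?N (g*w) = g*A" by (simp only: gw restr_add 1 2 add_0_right)
  thus ?thesis unfolding A_def .
qed

lemma sum_in: "(\<And>a b. a \<in> T \<Longrightarrow> b \<in> T \<Longrightarrow> a + b \<in> T) \<Longrightarrow> 0 \<in> T \<Longrightarrow> (\<And>i. i \<in> I \<Longrightarrow> f i \<in> T) \<Longrightarrow> sum f I \<in> T"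
  by (induction I rule: infinite_finite_induct) auto

lemma prod_in: "(\<And>a b. a \<in> T \<Longrightarrow> b \<in> T \<Longrightarrow> a * b \<in> T) \<Longrightarrow> 1 \<in> T \<Longrightarrow> (\<And>i. i \<in> I \<Longrightarrow> f i \<in> T) \<Longrightarrow> prod f I \<in> T"
  by (induction I rule: infinite_finite_induct) auto

lemma pow_in: "(\<And>a b. a \<in> T \<Longrightarrow> b \<in> T \<Longrightarrow> a * b \<in> T) \<Longrightarrow> 1 \<in> T \<Longrightarrow> a \<in> T \<Longrightarrow> a ^ k \<in> T"
  by (induction k) auto

lemma evalL_in:
  fixes T :: "'r::idom ratfun set"
  assumes add: "\<And>a b. a \<in> T \<Longrightarrow> b \<in> T \<Longrightarrow> a + b \<in> T"
    and mul: "\<And>a b. a \<in> T \<Longrightarrow> b \<in> T \<Longrightarrow> a * b \<in> T"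
    and c: "\<And>c. constF c \<in> T"
    and mons: "\<And>m i. m \<in> Poly_Mapping.keys p \<Longrightarrow> i \<in> Poly_Mapping.keys m \<Longrightarrow> z i powi Poly_Mapping.lookup m i \<in> T"
  shows "evalL z p \<in> T"
proof -
  have 0: "0 \<in> T" using c[of 0] by simp
  have 1: "1 \<in> T" using c[of 1] by simp
  show ?thesis unfolding evalL_def
    by (rule sum_in[OF add 0]) (auto intro!: mul c prod_in[OF mul 1] mons)
qed

definition Lset :: "(nat \<Rightarrow> 'r::idom ratfun) \<Rightarrow> nat set \<Rightarrow> ((nat \<Rightarrow>\<^sub>0 int) \<Rightarrow> bool) \<Rightarrow> 'r ratfun set" where
  "Lset z S P = {evalL z p | p. vars p \<subseteq> S \<and> (\<forall>m\<in>Poly_Mapping.keys p. P m)}"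

locale goodP =
  fixes P :: "(nat \<Rightarrow>\<^sub>0 int) \<Rightarrow> bool"
  assumes P0: "P 0" and Padd: "P a \<Longrightarrow> P b \<Longrightarrow> P (a + b)"

lemma Lset_add:
  assumes "a \<in> Lset z S P" "b \<in> Lset z S P"
  shows "a + b \<in> Lset z S P"
proof -
  obtain p q where "a = evalL z p" "vars p \<subseteq> S" "\<forall>m\<in>Poly_Mapping.keys p. P m"
    "b = evalL z q" "vars q \<subseteq> S" "\<forall>m\<in>Poly_Mapping.keys q. P m"
    using assms unfolding Lset_def by blast
  thus ?thesis unfolding Lset_def using vars_add[of p q] keys_add[of p q]
    by (auto intro!: exI[of _ "p+q"] simp: evalL_add)
qed

lemma Lset_uminus:
  assumes "a \<in> Lset z S P"
  shows "- a \<in> Lset z S P"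
proof -
  obtain p where "a = evalL z p" "vars p \<subseteq> S" "\<forall>m\<in>Poly_Mapping.keys p. P m"
    using assms unfolding Lset_def by blast
  thus ?thesis unfolding Lset_def
    by (auto intro!: exI[of _ "-p"] simp: evalL_uminus vars_uminus)
qed

lemma Lset_diff: "a \<in> Lset z S P \<Longrightarrow> b \<in> Lset z S P \<Longrightarrow> a - b \<in> Lset z S P"
  using Lset_add[of a z S P "-b"] Lset_uminus[of b z S P] by simp

lemma (in goodP) Lset_mult:
  assumes "a \<in> Lset z S P" "b \<in> Lset z S P" "\<And>i. i \<in> S \<Longrightarrow> z i \<noteq> 0"
  shows "a * b \<in> Lset z S P"
proof -
  obtain p q where pq: "a = evalL z p" "vars p \<subseteq> S" "\<forall>m\<in>Poly_Mapping.keys p. P m"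
    "b = evalL z q" "vars q \<subseteq> S" "\<forall>m\<in>Poly_Mapping.keys q. P m"
    using assms unfolding Lset_def by blast
  have "\<forall>m\<in>Poly_Mapping.keys (p*q). P m"
    using keys_mult[of p q] pq Padd by blast
  moreover have "evalL z (p*q) = a * b" using pq assms(3) by (subst evalL_mult) auto
  ultimately show ?thesis unfolding Lset_def using vars_mult[of p q] pq
    by (auto intro!: exI[of _ "p*q"])
qed

lemma (in goodP) Lset_const: "constF c \<in> Lset z S P"
  unfolding Lset_def
  by (rule CollectI, rule exI[of _ "Poly_Mapping.single 0 c"]) (auto simp: evalL_single vars_def P0)

lemma Lset_mono:
  assumes "P (Poly_Mapping.single i k)" "i \<in> S"
  shows "z i powi k \<in> Lset z S P"
  unfolding Lset_def
  by (rule CollectI, rule exI[of _ "Poly_Mapping.single (Poly_Mapping.single i k) 1"])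
     (use assms in \<open>auto simp: evalL_single mon_single vars_def split: if_splits\<close>)

lemma (in goodP) evalL_in_Lset:
  assumes "\<And>i. i \<in> S \<Longrightarrow> z i \<noteq> 0"
    and "\<And>m i. m \<in> Poly_Mapping.keys p \<Longrightarrow> i \<in> Poly_Mapping.keys m \<Longrightarrow> w i powi Poly_Mapping.lookup m i \<in> Lset z S P"
  shows "evalL w p \<in> Lset z S P"
  by (rule evalL_in) (auto intro: Lset_add Lset_mult[OF _ _ assms(1)] Lset_const assms(2))


lemma goodP_True: "goodP (\<lambda>_. True)" by (simp add: goodP_def)
lemma goodP_PT: "goodP (\<lambda>m. Poly_Mapping.lookup m j \<ge> (0::int))"
  by (simp add: goodP_def lookup_add)
lemma goodP_PM: "goodP (\<lambda>m. Poly_Mapping.lookup m j \<ge> (0::int) \<and> Poly_Mapping.lookup m 0 \<ge> 0)"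
  by (simp add: goodP_def lookup_add)

lemma hatF_facts:
  fixes x :: "nat \<Rightarrow> 'r::{factorial_semiring,idom} ratfun"
  assumes lp: "LP_seed n x F" and j: "j \<in> {1..n}"
  shows "vars (hatF n F j) \<subseteq> {1..n} - {j}" "evalL x (hatF n F j) \<noteq> 0"
proof -
  have ai: "alg_indep x n" using lp by (simp add: LP_seed_def transc_basis_def)
  have xnz: "\<And>i. i \<in> {1..n} \<Longrightarrow> x i \<noteq> 0" using alg_indep_nz[OF ai] by blast
  have Fv: "vars (F j) \<subseteq> {1..n} - {j}" and Fi: "irreducible (F j)" using lp j unfolding LP_seed_def by blast+
  define e where "e = (\<Sum>k\<in>{1..n} - {j}. Poly_Mapping.single k (- int (expo n F j k)))"
  have h: "hatF n F j = toL (F j) * monoL e" unfolding hatF_def e_def ..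
  have ke: "Poly_Mapping.keys e \<subseteq> {1..n} - {j}"
  proof -
    have "Poly_Mapping.keys e \<subseteq> (\<Union>k\<in>{1..n} - {j}. Poly_Mapping.keys (Poly_Mapping.single k (- int (expo n F j k))))"
      unfolding e_def by (rule keys_sum)
    thus ?thesis by (auto split: if_splits)
  qed
  have vm: "vars (monoL e :: 'r lpoly) \<subseteq> {1..n} - {j}"
    using vars_single[of e "1::'r"] ke by (auto simp: monoL_def)
  have vt: "vars (toL (F j)) \<subseteq> {1..n} - {j}" using vars_toL[of "F j"] Fv by blast
  show "vars (hatF n F j) \<subseteq> {1..n} - {j}" unfolding h using vars_mult[of "toL (F j)" "monoL e"] vm vt by blast
  have "evalL x (hatF n F j) = evalL x (toL (F j)) * evalL x (monoL e)"
    unfolding h by (rule evalL_mult) (use vm vt xnz in blast)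
  also have "\<dots> = evalP x (F j) * mon x e" by (simp add: evalL_toL monoL_def evalL_single)
  also have "\<dots> \<noteq> 0"
  proof -
    have "F j \<noteq> 0" using Fi by auto
    hence "evalP x (F j) \<noteq> 0" using ai Fv unfolding alg_indep_def by blast
    moreover have "mon x e \<noteq> 0" by (rule mon_nonzero) (use ke xnz in blast)
    ultimately show ?thesis by simp
  qed
  finally show "evalL x (hatF n F j) \<noteq> 0" .
qed

lemma mixed_eq:
  fixes x :: "nat \<Rightarrow> 'r::{factorial_semiring,idom} ratfun"
  assumes lp: "LP_seed n x F" and j: "j \<in> {1..n}"
  shows "MixedRing n x F j = LaurentRing x n \<inter> LaurentRing (x(j := xprime n x F j)) n"
proof -
  have ai: "alg_indep x n" using lp by (simp add: LP_seed_def transc_basis_def)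
  have xnz: "\<And>i. i \<in> {1..n} \<Longrightarrow> x i \<noteq> 0" using alg_indep_nz[OF ai] by blast
  define h where "h = hatF n F j"
  define H where "H = evalL x h"
  define x' where "x' = xprime n x F j"
  have j0: "j \<noteq> 0" using j by auto
  have hv: "vars h \<subseteq> {1..n} - {j}" using hatF_facts[OF lp j] by (simp add: h_def)
  have Hnz: "H \<noteq> 0" using hatF_facts[OF lp j] by (simp add: h_def H_def)
  have xjnz: "x j \<noteq> 0" using xnz j by blast
  have x'd: "x' = H / x j" by (simp add: x'_def H_def h_def xprime_def)
  have x'nz: "x' \<noteq> 0" using x'd Hnz xjnz by simp
  have Hx: "H = x' * x j" using x'd xjnz by simp
  have hkeys: "Poly_Mapping.lookup m j = 0" if mh: "m \<in> Poly_Mapping.keys h" for m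
  proof -
    have "j \<notin> Poly_Mapping.keys m" using hv mh by (auto simp: vars_def)
    thus ?thesis by (simp add: in_keys_iff)
  qed
  define z' where "z' = x(j := x')"
  define z0 where "z0 = x(0 := x')"
  have nz': "\<And>i. i \<in> {1..n} \<Longrightarrow> z' i \<noteq> 0" using xnz x'nz by (simp add: z'_def)
  have nz0: "\<And>i. i \<in> {0..n} \<Longrightarrow> z0 i \<noteq> 0" using xnz x'nz by (auto simp: z0_def)
  define PM where "PM = (\<lambda>m. Poly_Mapping.lookup m j \<ge> (0::int) \<and> Poly_Mapping.lookup m 0 \<ge> 0)"
  define PT where "PT = (\<lambda>m. Poly_Mapping.lookup m j \<ge> (0::int))"
  define L where "L = Lset x {1..n} (\<lambda>_. True)"
  define Lj where "Lj = Lset z' {1..n} (\<lambda>_. True)"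
  define M where "M = Lset z0 {0..n} PM"
  define T where "T = Lset x {1..n} PT"
  have gT: "goodP (\<lambda>_::nat\<Rightarrow>\<^sub>0int. True)" by (rule goodP_True)
  have gPM: "goodP PM" unfolding PM_def by (rule goodP_PM)
  have gPT: "goodP PT" unfolding PT_def by (rule goodP_PT)
  have Leq: "LaurentRing x n = L" by (simp add: LaurentRing_def Lset_def L_def)
  have Ljeq: "LaurentRing (x(j := xprime n x F j)) n = Lj" by (simp add: LaurentRing_def Lset_def Lj_def z'_def x'_def)
  have Meq: "MixedRing n x F j = M" by (auto simp: MixedRing_def Lset_def M_def PM_def z0_def x'_def)
  have Lmul: "a * b \<in> L" if "a \<in> L" "b \<in> L" for a b
    using goodP.Lset_mult[OF gT] that xnz unfolding L_def by blast
  have L1: "1 \<in> L" using goodP.Lset_const[OF gT, of 1] unfolding L_def by simp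
  have Ljmul: "a * b \<in> Lj" if "a \<in> Lj" "b \<in> Lj" for a b
    using goodP.Lset_mult[OF gT] that nz' unfolding Lj_def by blast
  have Lj1: "1 \<in> Lj" using goodP.Lset_const[OF gT, of 1] unfolding Lj_def by simp
  have Mmul: "a * b \<in> M" if "a \<in> M" "b \<in> M" for a b
    using goodP.Lset_mult[OF gPM] that nz0 unfolding M_def by blast
  have M1: "1 \<in> M" using goodP.Lset_const[OF gPM, of 1] unfolding M_def by simp
  have Tmul: "a * b \<in> T" if "a \<in> T" "b \<in> T" for a b
    using goodP.Lset_mult[OF gPT] that xnz unfolding T_def by blast
  have T1: "1 \<in> T" using goodP.Lset_const[OF gPT, of 1] unfolding T_def by simp
  have HL: "H \<in> L" unfolding L_def Lset_def H_def using hv by blast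
  have HT: "H \<in> T" unfolding T_def Lset_def H_def PT_def using hv hkeys by auto
  have HLj: "H \<in> Lj"
  proof -
    have "H = evalL z' h" unfolding H_def by (rule evalL_cong) (use hv in \<open>auto simp: z'_def\<close>)
    thus ?thesis unfolding Lj_def Lset_def using hv by blast
  qed
  have x'L: "x' \<in> L"
  proof -
    have "x j powi (-1) \<in> L" unfolding L_def by (rule Lset_mono) (use j in auto)
    hence "H * x j powi (-1) \<in> L" using HL Lmul by blast
    thus ?thesis using x'd by (simp add: power_int_minus field_simps)
  qed
  have x'Lj: "x' \<in> Lj"
  proof -
    have "z' j powi 1 \<in> Lj" unfolding Lj_def by (rule Lset_mono) (use j in auto)
    thus ?thesis by (simp add: z'_def)
  qed
  have xjLj: "x j \<in> Lj"
  proof -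
    have "z' j powi (-1) \<in> Lj" unfolding Lj_def by (rule Lset_mono) (use j in auto)
    hence "H * x' powi (-1) \<in> Lj" using HLj Ljmul by (simp add: z'_def)
    thus ?thesis using Hx x'nz by (simp add: power_int_minus field_simps)
  qed
  have x'M: "x' \<in> M"
  proof -
    have "z0 0 powi 1 \<in> M" unfolding M_def by (rule Lset_mono) (use j0 in \<open>auto simp: PM_def lookup_single lookup_one\<close>)
    thus ?thesis by (simp add: z0_def)
  qed
  have part1: "M \<subseteq> L \<inter> Lj"
  proof
    fix y assume "y \<in> M"
    then obtain p where p: "y = evalL z0 p" "vars p \<subseteq> {0..n}" "\<forall>m\<in>Poly_Mapping.keys p. PM m"
      unfolding M_def Lset_def by blast
    have iv: "i \<in> {0..n}" if "m \<in> Poly_Mapping.keys p" "i \<in> Poly_Mapping.keys m" for m i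
      using p(2) that by (auto simp: vars_def)
    have "y \<in> L" unfolding p(1) L_def
    proof (rule goodP.evalL_in_Lset[OF gT])
      show "\<And>i. i \<in> {1..n} \<Longrightarrow> x i \<noteq> 0" by (rule xnz)
      fix m i assume mi: "m \<in> Poly_Mapping.keys p" "i \<in> Poly_Mapping.keys m"
      show "z0 i powi Poly_Mapping.lookup m i \<in> Lset x {1..n} (\<lambda>_. True)"
      proof (cases "i = 0")
        case True
        have "Poly_Mapping.lookup m 0 \<ge> 0" using p(3) mi by (simp add: PM_def)
        then obtain k where "Poly_Mapping.lookup m 0 = int k" using nonneg_eq_int by blast
        moreover have "x' ^ k \<in> L" by (rule pow_in[OF Lmul L1 x'L])
        ultimately show ?thesis using True by (simp add: z0_def L_def)
      next
        case False
        hence "i \<in> {1..n}" using iv[OF mi] by auto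
        thus ?thesis using False by (simp add: z0_def Lset_mono)
      qed
    qed
    moreover have "y \<in> Lj" unfolding p(1) Lj_def
    proof (rule goodP.evalL_in_Lset[OF gT])
      show "\<And>i. i \<in> {1..n} \<Longrightarrow> z' i \<noteq> 0" by (rule nz')
      fix m i assume mi: "m \<in> Poly_Mapping.keys p" "i \<in> Poly_Mapping.keys m"
      show "z0 i powi Poly_Mapping.lookup m i \<in> Lset z' {1..n} (\<lambda>_. True)"
      proof (cases "i = 0")
        case True
        have "Poly_Mapping.lookup m 0 \<ge> 0" using p(3) mi by (simp add: PM_def)
        then obtain k where "Poly_Mapping.lookup m 0 = int k" using nonneg_eq_int by blast
        moreover have "x' ^ k \<in> Lj" by (rule pow_in[OF Ljmul Lj1 x'Lj])
        ultimately show ?thesis using True by (simp add: z0_def Lj_def)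
      next
        case False
        hence i1: "i \<in> {1..n}" using iv[OF mi] by auto
        show ?thesis
        proof (cases "i = j")
          case True
          have "Poly_Mapping.lookup m j \<ge> 0" using p(3) mi by (simp add: PM_def)
          then obtain k where "Poly_Mapping.lookup m j = int k" using nonneg_eq_int by blast
          moreover have "x j ^ k \<in> Lj" by (rule pow_in[OF Ljmul Lj1 xjLj])
          ultimately show ?thesis using True j0 by (simp add: z0_def Lj_def)
        next
          case False
          have "z' i powi Poly_Mapping.lookup m i \<in> Lset z' {1..n} (\<lambda>_. True)"
            using i1 by (simp add: Lset_mono)
          thus ?thesis using False \<open>i \<noteq> 0\<close> by (simp add: z0_def z'_def)
        qed
      qed
    qed
    ultimately show "y \<in> L \<inter> Lj" by blast
  qed
  have part2: "L \<inter> Lj \<subseteq> M"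
  proof
    fix y assume y: "y \<in> L \<inter> Lj"
    then obtain q where q: "y = evalL z' q" "vars q \<subseteq> {1..n}"
      unfolding Lj_def Lset_def by blast
    have qv: "i \<in> {1..n}" if "m \<in> Poly_Mapping.keys q" "i \<in> Poly_Mapping.keys m" for m i
      using q(2) that by (auto simp: vars_def)
    define qp where "qp = restr PT q"
    define qm where "qm = restr (\<lambda>m. \<not> PT m) q"
    have qs: "q = qp + qm" unfolding qp_def qm_def by (simp add: restr_split)
    define yp where "yp = evalL z' qp"
    have ypM: "yp \<in> M" unfolding yp_def M_def
    proof (rule goodP.evalL_in_Lset[OF gPM])
      show "\<And>i. i \<in> {0..n} \<Longrightarrow> z0 i \<noteq> 0" by (rule nz0)
      fix m i assume mi: "m \<in> Poly_Mapping.keys qp" "i \<in> Poly_Mapping.keys m"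
      have mq: "m \<in> Poly_Mapping.keys q" and mj: "Poly_Mapping.lookup m j \<ge> 0"
        using mi(1) by (auto simp: qp_def keys_restr PT_def)
      have i1: "i \<in> {1..n}" using qv[OF mq mi(2)] .
      show "z' i powi Poly_Mapping.lookup m i \<in> Lset z0 {0..n} PM"
      proof (cases "i = j")
        case True
        obtain k where "Poly_Mapping.lookup m j = int k" using mj nonneg_eq_int by blast
        moreover have "x' ^ k \<in> M" by (rule pow_in[OF Mmul M1 x'M])
        ultimately show ?thesis using True by (simp add: z'_def M_def)
      next
        case False
        have "z0 i powi Poly_Mapping.lookup m i \<in> Lset z0 {0..n} PM"
          by (rule Lset_mono) (use False i1 in \<open>auto simp: PM_def lookup_single\<close>)
        thus ?thesis using False i1 by (simp add: z0_def z'_def)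
      qed
    qed
    have ypL: "yp \<in> L" using ypM part1 by blast
    define zz where "zz = y - yp"
    have zzL: "zz \<in> L" unfolding zz_def L_def using y ypL unfolding L_def by (blast intro: Lset_diff)
    then obtain w where w: "zz = evalL x w" "vars w \<subseteq> {1..n}"
      unfolding L_def Lset_def by blast
    have zzq: "zz = evalL z' qm" unfolding zz_def yp_def q(1) by (subst qs) (simp add: evalL_add)
    define N where "N = (\<Sum>m\<in>Poly_Mapping.keys qm. nat (- Poly_Mapping.lookup m j))"
    have monT: "H ^ N * mon z' m \<in> T" if mk: "m \<in> Poly_Mapping.keys qm" for m
    proof -
      have mq: "m \<in> Poly_Mapping.keys q" and mj: "Poly_Mapping.lookup m j < 0"
        using mk by (auto simp: qm_def keys_restr PT_def)
      have jm: "j \<in> Poly_Mapping.keys m" using mj by (simp add: in_keys_iff)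
      obtain k where k: "Poly_Mapping.lookup m j = - int k" using mj
        by (metis add.inverse_inverse less_le neg_0_le_iff_le nonneg_eq_int)
      have kN: "k \<le> N" unfolding N_def
        using member_le_sum[of m "Poly_Mapping.keys qm" "\<lambda>m. nat (- Poly_Mapping.lookup m j)"] mk k by simp
      have split: "mon z' m = z' j powi Poly_Mapping.lookup m j * (\<Prod>i\<in>Poly_Mapping.keys m - {j}. z' i powi Poly_Mapping.lookup m i)"
        unfolding mon_def using jm by (simp add: prod.remove)
      have rest: "(\<Prod>i\<in>Poly_Mapping.keys m - {j}. z' i powi Poly_Mapping.lookup m i) \<in> T"
      proof (rule prod_in[OF Tmul T1])
        fix i assume i: "i \<in> Poly_Mapping.keys m - {j}"
        have "x i powi Poly_Mapping.lookup m i \<in> T" unfolding T_def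
          by (rule Lset_mono) (use i qv[OF mq] in \<open>auto simp: PT_def lookup_single\<close>)
        thus "z' i powi Poly_Mapping.lookup m i \<in> T" using i by (simp add: z'_def)
      qed
      have first: "H ^ N * z' j powi Poly_Mapping.lookup m j = H ^ (N - k) * x j ^ k"
      proof -
        have "H ^ N = H ^ (N - k) * H ^ k" using kN by (simp add: power_add[symmetric])
        moreover have "z' j powi Poly_Mapping.lookup m j = x j ^ k / H ^ k"
          using k x'd by (simp add: z'_def power_int_minus power_divide)
        ultimately show ?thesis using Hnz by simp
      qed
      have "x j ^ k \<in> T"
      proof -
        have "x j powi int k \<in> T" unfolding T_def
          by (rule Lset_mono) (use j in \<open>auto simp: PT_def\<close>)
        thus ?thesis by simp
      qed
      hence "H ^ N * z' j powi Poly_Mapping.lookup m j \<in> T"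
        unfolding first using Tmul pow_in[OF Tmul T1 HT] by blast
      hence "(H ^ N * z' j powi Poly_Mapping.lookup m j) * (\<Prod>i\<in>Poly_Mapping.keys m - {j}. z' i powi Poly_Mapping.lookup m i) \<in> T"
        using rest by (rule Tmul)
      thus ?thesis unfolding split by (simp only: mult.assoc)
    qed
    have HzT: "H ^ N * zz \<in> T"
    proof -
      have "H ^ N * zz = (\<Sum>m\<in>Poly_Mapping.keys qm. constF (Poly_Mapping.lookup qm m) * (H ^ N * mon z' m))"
        unfolding zzq evalL_sumk sumk_def by (simp add: sum_distrib_left mult.left_commute)
      also have "\<dots> \<in> T"
      proof (rule sum_in[where T=T])
        show "\<And>a b. a \<in> T \<Longrightarrow> b \<in> T \<Longrightarrow> a + b \<in> T" unfolding T_def by (rule Lset_add)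
        show "0 \<in> T" using goodP.Lset_const[OF gPT, of 0] unfolding T_def by simp
        fix m assume mk: "m \<in> Poly_Mapping.keys qm"
        have "constF (Poly_Mapping.lookup qm m) \<in> T" unfolding T_def by (rule goodP.Lset_const[OF gPT])
        thus "constF (Poly_Mapping.lookup qm m) * (H ^ N * mon z' m) \<in> T" using monT[OF mk] by (rule Tmul)
      qed
      finally show ?thesis .
    qed
    then obtain R where R: "H ^ N * zz = evalL x R" "vars R \<subseteq> {1..n}" "\<forall>m\<in>Poly_Mapping.keys R. PT m"
      unfolding T_def Lset_def by blast
    have hp: "evalL x (h ^ N) = H ^ N \<and> vars (h ^ N) \<subseteq> {1..n} - {j}"
      unfolding H_def by (rule evalL_power) (use hv xnz in auto)
    have ev0: "evalL x (h ^ N * w - R) = 0"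
    proof -
      have "evalL x (h ^ N * w) = H ^ N * zz"
        using hp w by (subst evalL_mult) (use xnz in auto)
      thus ?thesis using R(1) by (simp add: evalL_diff)
    qed
    have vv: "vars (h ^ N * w - R) \<subseteq> {1..n}"
      using vars_diff[of "h^N * w" R] vars_mult[of "h^N" w] hp w(2) R(2) by blast
    have eqR: "h ^ N * w = R" using uniqL[OF ai vv ev0] by simp
    let ?NG = "\<lambda>m. Poly_Mapping.lookup m j < (0::int)"
    have "restr ?NG (h ^ N * w) = h ^ N * restr ?NG w"
    proof (rule restr_mult)
      fix m assume mh: "m \<in> Poly_Mapping.keys (h ^ N)"
      have "j \<notin> Poly_Mapping.keys m" using hp mh by (auto simp: vars_def)
      thus "Poly_Mapping.lookup m j = 0" by (simp add: in_keys_iff)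
    qed
    moreover have "restr ?NG R = 0" by (rule restr_zero) (use R(3) in \<open>auto simp: PT_def\<close>)
    ultimately have "h ^ N * restr ?NG w = 0" using eqR by simp
    moreover have "h \<noteq> 0" using Hnz by (auto simp: H_def)
    ultimately have rz: "restr ?NG w = 0" by simp
    have wpos: "Poly_Mapping.lookup m j \<ge> 0" if "m \<in> Poly_Mapping.keys w" for m
    proof (rule ccontr)
      assume "\<not> ?thesis"
      hence "Poly_Mapping.lookup (restr ?NG w) m = Poly_Mapping.lookup w m" by (simp add: lookup_restr)
      thus False using rz that by (simp add: in_keys_iff)
    qed
    have zzM: "zz \<in> M"
    proof -
      have "zz = evalL z0 w" unfolding w(1) by (rule evalL_cong) (use w(2) in \<open>auto simp: z0_def\<close>)
      moreover have "\<forall>m\<in>Poly_Mapping.keys w. PM m"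
      proof
        fix m assume mw: "m \<in> Poly_Mapping.keys w"
        have "0 \<notin> Poly_Mapping.keys m" using w(2) mw by (auto simp: vars_def)
        thus "PM m" using wpos[OF mw] by (simp add: PM_def in_keys_iff)
      qed
      ultimately show ?thesis unfolding M_def Lset_def using w(2) by fastforce
    qed
    have "y = yp + zz" by (simp add: zz_def)
    thus "y \<in> M" using ypM zzM unfolding M_def by (blast intro: Lset_add)
  qed
  show ?thesis using part1 part2 Leq Ljeq Meq by blast
qed


theorem lemma4p2:
  fixes n :: nat
    and x :: "nat \<Rightarrow> 'r::{factorial_semiring,idom,ring_char_0} ratfun"
    and F :: "nat \<Rightarrow> 'r mpoly"
  assumes "n \<ge> 1"
    and "LP_seed n x F"
  shows "upper_bound n x F = (\<Inter>j\<in>{1..n}. MixedRing n x F j)"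
proof -
  have "(\<Inter>j\<in>{1..n}. MixedRing n x F j) = (\<Inter>j\<in>{1..n}. LaurentRing x n \<inter> LaurentRing (x(j := xprime n x F j)) n)"
    using mixed_eq[OF assms(2)] by auto
  also have "\<dots> = upper_bound n x F"
    using assms(1) unfolding upper_bound_def by auto
  finally show ?thesis by simp
qed

end
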